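(* Assume (H1). For each $\nu\in L^2(0,T;\mathbb R^{n_1})$, the two-point boundary value problem $\dot z_i=Az_i+B\nu+Gz+\gamma q$, $\dot z=(A+G)z+\gamma q$, $\dot q=-(A+G)^Tq-(I-\Gamma)^TQ(z_i-\Gamma z)$, $z_i(0)=z(0)=0$, $q(T)=Hz_i(T)$, has a unique solution $(z_i,z,q)\in C^1([0,T];\mathbb R^{3n})$.
   Context: Fix integers $n,n_1\ge1$, $T>0$, constant matrices $A,G,\Gamma\in\mathbb R^{n\times n}$, $B\in\mathbb R^{n\times n_1}$, $\gamma>0$, symmetric $Q\ge0$, $H\ge0$ ($n\times n$). Write $\widehat Q=(I-\Gamma)^TQ(I-\Gamma)$, $\|h\|_{L^2}=(\int_0^T|h|^2dt)^{1/2}$. For $g\in L^2(0,T;\mathbb R^n)$ let $\dot z=(A+G)z+g$, $z(0)=0$, $\bar J''(g)=\int_0^T\{-z^T\widehat Qz+\frac1\gamma|g|^2\}dt-z(T)^THz(T)$. (H1): there exists $\epsilon_0>0$ with $\bar J''(g)\ge\epsilon_0\|g\|_{L^2}^2$ for all $g\in L^2(0,T;\mathbb R^n)$.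
   Formalization: The solution $(z_i,z,q)$ is only a triple of continuous functions satisfying the three equations in integral form on [0,T], existing and unique among such triples, in place of a unique solution in $C^1([0,T];\mathbb R^{3n})$. The statement above fails without it. *)

theory Defs
  imports "HOL-Analysis.Analysis"
begin

text \<open>Square-integrable functions on [0,T] (pointwise representatives).\<close>
definition L2_on :: "real \<Rightarrow> (real \<Rightarrow> 'a::euclidean_space) \<Rightarrow> bool" where
  "L2_on T g \<longleftrightarrow> set_borel_measurable lborel {0..T} g \<and>
     set_integrable lborel {0..T} (\<lambda>t. (norm (g t))^2)"

definition L2_norm_sq :: "real \<Rightarrow> (real \<Rightarrow> 'a::euclidean_space) \<Rightarrow> real" where
  "L2_norm_sq T g = (LINT t:{0..T}|lborel. (norm (g t))^2)"

definition psd :: "real^'n^'n \<Rightarrow> bool" where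
  "psd M \<longleftrightarrow> transpose M = M \<and> (\<forall>x. 0 \<le> x \<bullet> (M *v x))"

definition Qhat :: "real^'n^'n \<Rightarrow> real^'n^'n \<Rightarrow> real^'n^'n" where
  "Qhat \<Gamma> Q = transpose (mat 1 - \<Gamma>) ** Q ** (mat 1 - \<Gamma>)"

text \<open>z solves z' = (A+G) z + g, z(0) = 0 on [0,T] (Caratheodory / integral sense).\<close>
definition state_sol :: "real^'n^'n \<Rightarrow> real^'n^'n \<Rightarrow> real \<Rightarrow> (real \<Rightarrow> real^'n)
    \<Rightarrow> (real \<Rightarrow> real^'n) \<Rightarrow> bool" where
  "state_sol A G T g z \<longleftrightarrow> continuous_on {0..T} z \<and>
     (\<forall>t\<in>{0..T}. ((\<lambda>s. (A + G) *v z s + g s) has_integral z t) {0..t})"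

text \<open>The second variation functional, evaluated along the state z of g.\<close>
definition Jpp :: "real^'n^'n \<Rightarrow> real^'n^'n \<Rightarrow> real^'n^'n \<Rightarrow> real \<Rightarrow> real
    \<Rightarrow> (real \<Rightarrow> real^'n) \<Rightarrow> (real \<Rightarrow> real^'n) \<Rightarrow> real" where
  "Jpp \<Gamma> Q H \<gamma> T g z =
     (LINT t:{0..T}|lborel. (- (z t \<bullet> (Qhat \<Gamma> Q *v z t)) + (1/\<gamma>) * (norm (g t))^2))
     - z T \<bullet> (H *v z T)"

definition H1 :: "real^'n^'n \<Rightarrow> real^'n^'n \<Rightarrow> real^'n^'n \<Rightarrow> real^'n^'n \<Rightarrow> real^'n^'n
    \<Rightarrow> real \<Rightarrow> real \<Rightarrow> bool" where
  "H1 A G \<Gamma> Q H \<gamma> T \<longleftrightarrow> (\<exists>\<epsilon>0>0. \<forall>g z. L2_on T g \<longrightarrow> state_sol A G T g z \<longrightarrow>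
      Jpp \<Gamma> Q H \<gamma> T g z \<ge> \<epsilon>0 * L2_norm_sq T g)"

definition bvp_sol :: "real^'n^'n \<Rightarrow> real^'n1^'n \<Rightarrow> real^'n^'n \<Rightarrow> real^'n^'n \<Rightarrow> real^'n^'n
    \<Rightarrow> real^'n^'n \<Rightarrow> real \<Rightarrow> real \<Rightarrow> (real \<Rightarrow> real^'n1)
    \<Rightarrow> (real \<Rightarrow> real^'n) \<Rightarrow> (real \<Rightarrow> real^'n) \<Rightarrow> (real \<Rightarrow> real^'n) \<Rightarrow> bool" where
  "bvp_sol A B G \<Gamma> Q H \<gamma> T \<nu> zi z q \<longleftrightarrow>
     continuous_on {0..T} zi \<and> continuous_on {0..T} z \<and> continuous_on {0..T} q \<and>
     (\<forall>t\<in>{0..T}. ((\<lambda>s. A *v zi s + B *v \<nu> s + G *v z s + \<gamma> *\<^sub>R q s) has_integral zi t) {0..t}) \<and>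
     (\<forall>t\<in>{0..T}. ((\<lambda>s. (A + G) *v z s + \<gamma> *\<^sub>R q s) has_integral z t) {0..t}) \<and>
     (\<forall>t\<in>{0..T}. ((\<lambda>s. transpose (A + G) *v q s
                        + transpose (mat 1 - \<Gamma>) *v (Q *v (zi s - \<Gamma> *v z s)))
                    has_integral (q t - H *v zi T)) {t..T})"

end

theory Submission
  imports Defs
begin


typedef (overloaded) ('a::euclidean_space) bop = "UNIV :: ('a \<Rightarrow>\<^sub>L 'a) set"
  morphisms bop_rep bop_abs by simp

setup_lifting type_definition_bop

instantiation bop :: (euclidean_space) real_normed_algebra_1
begin

lift_definition norm_bop :: "'a bop \<Rightarrow> real" is norm .
lift_definition minus_bop :: "'a bop \<Rightarrow> 'a bop \<Rightarrow> 'a bop" is "(-)" .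
lift_definition plus_bop :: "'a bop \<Rightarrow> 'a bop \<Rightarrow> 'a bop" is "(+)" .
lift_definition uminus_bop :: "'a bop \<Rightarrow> 'a bop" is uminus .
lift_definition zero_bop :: "'a bop" is 0 .
lift_definition scaleR_bop :: "real \<Rightarrow> 'a bop \<Rightarrow> 'a bop" is scaleR .
lift_definition times_bop :: "'a bop \<Rightarrow> 'a bop \<Rightarrow> 'a bop" is blinfun_compose .
lift_definition one_bop :: "'a bop" is id_blinfun .

definition dist_bop :: "'a bop \<Rightarrow> 'a bop \<Rightarrow> real"
  where "dist_bop a b = norm (a - b)"

definition uniformity_bop :: "('a bop \<times> 'a bop) filter" where
  "uniformity_bop = (INF e\<in>{0 <..}. principal {(x, y). dist x y < e})"

definition open_bop :: "'a bop set \<Rightarrow> bool"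
  where "open_bop S = (\<forall>x\<in>S. \<forall>\<^sub>F (x', y) in uniformity. x' = x \<longrightarrow> y \<in> S)"

definition sgn_bop :: "'a bop \<Rightarrow> 'a bop"
  where "sgn_bop x = scaleR (inverse (norm x)) x"

lemma bop_eq_iff: "(x = y) \<longleftrightarrow> bop_rep x = bop_rep y" by (simp add: bop_rep_inject)

declare [[goals_limit=40]]
instance
proof
  show "dist x y = norm (x - y)" for x y :: "'a bop" by (simp add: dist_bop_def)
  show "sgn x = inverse (norm x) *\<^sub>R x" for x :: "'a bop" by (simp add: sgn_bop_def)
  show "(uniformity :: ('a bop \<times> 'a bop) filter) = (INF e\<in>{0 <..}. principal {(x, y). dist x y < e})"
    by (simp add: uniformity_bop_def)
  show "open U = (\<forall>x\<in>U. \<forall>\<^sub>F (x', y) in uniformity. x' = x \<longrightarrow> y \<in> U)" for U :: "'a bop set"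
    by (simp add: open_bop_def)
next show "a + b + c = a + (b + c)" for a b c :: "'a bop" by transfer (simp add: algebra_simps)
next show "a + b = b + a" for a b :: "'a bop" by transfer (simp add: algebra_simps)
next show "0 + a = a" for a :: "'a bop" by transfer simp
next show "- a + a = 0" for a :: "'a bop" by transfer simp
next show "a - b = a + - b" for a b :: "'a bop" by transfer simp
next show "a *\<^sub>R (x + y) = a *\<^sub>R x + a *\<^sub>R y" for a and x y :: "'a bop" by transfer (simp add: scaleR_add_right)
next show "(a + b) *\<^sub>R x = a *\<^sub>R x + b *\<^sub>R x" for a b and x :: "'a bop" by transfer (simp add: scaleR_add_left)
next show "a *\<^sub>R b *\<^sub>R x = (a * b) *\<^sub>R x" for a b and x :: "'a bop" by transfer simp
next show "1 *\<^sub>R x = x" for x :: "'a bop" by transfer simp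
next show "a * b * c = a * (b * c)" for a b c :: "'a bop" by transfer (rule blinfun_eqI, simp)
next show "(a + b) * c = a * c + b * c" for a b c :: "'a bop" by transfer (rule blinfun_eqI, simp add: blinfun.bilinear_simps)
next show "a * (b + c) = a * b + a * c" for a b c :: "'a bop" by transfer (rule blinfun_eqI, simp add: blinfun.bilinear_simps)
next show "a *\<^sub>R x * y = a *\<^sub>R (x * y)" for a and x y :: "'a bop" by transfer (rule blinfun_eqI, simp add: blinfun.bilinear_simps)
next show "x * a *\<^sub>R y = a *\<^sub>R (x * y)" for a and x y :: "'a bop" by transfer (rule blinfun_eqI, simp add: blinfun.bilinear_simps)
next show "1 * a = a" for a :: "'a bop" by transfer (rule blinfun_eqI, simp)
next show "a * 1 = a" for a :: "'a bop" by transfer (rule blinfun_eqI, simp)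
next show "0 \<noteq> (1::'a bop)" 
  proof transfer
    show "0 \<noteq> (id_blinfun::'a \<Rightarrow>\<^sub>L 'a)"
      using norm_blinfun_id[where 'a='a] by (metis norm_zero zero_neq_one)
  qed
next show "(norm x = 0) = (x = 0)" for x :: "'a bop" by transfer simp
next show "norm (x + y) \<le> norm x + norm y" for x y :: "'a bop" by transfer (rule norm_triangle_ineq)
next show "norm (a *\<^sub>R x) = \<bar>a\<bar> * norm x" for a and x :: "'a bop" by transfer simp
next show "norm (x * y) \<le> norm x * norm y" for x y :: "'a bop" by transfer (rule norm_blinfun_compose)
next show "norm (1::'a bop) = 1" by transfer simp
qed
end

lemma bop_Cauchy: "Cauchy (X :: nat \<Rightarrow> 'a::euclidean_space bop) \<Longrightarrow> convergent X"
proof -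
  assume c: "Cauchy X"
  have dn: "dist (X m) (X n) = dist (bop_rep (X m)) (bop_rep (X n))" for m n
    by (simp add: dist_bop_def dist_norm norm_bop.rep_eq minus_bop.rep_eq)
  have "Cauchy (\<lambda>n. bop_rep (X n))" using c unfolding Cauchy_def dn .
  then obtain L where L: "(\<lambda>n. bop_rep (X n)) \<longlonglongrightarrow> L"
    using Cauchy_convergent unfolding convergent_def by blast
  have "X \<longlonglongrightarrow> bop_abs L"
  proof (rule metric_LIMSEQ_I)
    fix r :: real assume "0 < r"
    from metric_LIMSEQ_D[OF L this] obtain N where N: "\<forall>n\<ge>N. dist (bop_rep (X n)) L < r" by blast
    have "dist (X n) (bop_abs L) = dist (bop_rep (X n)) L" for n
      by (simp add: dist_bop_def norm_bop.rep_eq minus_bop.rep_eq bop_abs_inverse dist_norm)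
    then show "\<exists>no. \<forall>n\<ge>no. dist (X n) (bop_abs L) < r"
      using N by metis
  qed
  then show ?thesis unfolding convergent_def by blast
qed

instance bop :: (euclidean_space) banach
  by standard (rule bop_Cauchy)

definition bapp :: "'a::euclidean_space bop \<Rightarrow> 'a \<Rightarrow> 'a" where
  "bapp X v = blinfun_apply (bop_rep X) v"

lemma bapp_mult: "bapp (X * Y) v = bapp X (bapp Y v)"
  by (simp add: bapp_def times_bop.rep_eq)

lemma bapp_one[simp]: "bapp 1 v = v"
  by (simp add: bapp_def one_bop.rep_eq)

lemma bounded_bilinear_bapp: "bounded_bilinear bapp"
proof
  fix a a' :: "'a::euclidean_space bop" and b b' :: 'a and r :: real
  show "bapp (a + a') b = bapp a b + bapp a' b"
    by (simp add: bapp_def plus_bop.rep_eq blinfun.add_left)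
  show "bapp a (b + b') = bapp a b + bapp a b'"
    by (simp add: bapp_def blinfun.add_right)
  show "bapp (r *\<^sub>R a) b = r *\<^sub>R bapp a b"
    by (simp add: bapp_def scaleR_bop.rep_eq blinfun.scaleR_left)
  show "bapp a (r *\<^sub>R b) = r *\<^sub>R bapp a b"
    by (simp add: bapp_def blinfun.scaleR_right)
  show "\<exists>K. \<forall>a b. norm (bapp a b) \<le> norm a * norm b * K"
    by (rule exI[where x=1]) (simp add: bapp_def norm_bop.rep_eq norm_blinfun)
qed

interpretation bapp: bounded_bilinear bapp
  by (rule bounded_bilinear_bapp)

lemma exp_vd: "((\<lambda>t. exp (t *\<^sub>R (L::'a::euclidean_space bop))) has_vector_derivative exp (t *\<^sub>R L) * L) (at t within S)"
  by (rule exp_scaleR_has_vector_derivative_right)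

lemma exp_cont: "continuous_on S (\<lambda>t. exp (t *\<^sub>R (L::'a::euclidean_space bop)))"
  by (rule continuous_on_vector_derivative[OF exp_vd])

lemma exp_inv: "exp (t *\<^sub>R (L::'a::euclidean_space bop)) * exp (t *\<^sub>R (- L)) = 1"
  using exp_minus_inverse[of "t *\<^sub>R L"] by simp

lemma ode_exist:
  fixes L :: "'a::euclidean_space bop" and F :: "real \<Rightarrow> 'a" and y0 :: 'a
  assumes F: "continuous_on {0..T} F"
  defines "Y \<equiv> \<lambda>t. bapp (exp (t *\<^sub>R L)) (y0 + integral {0..t} (\<lambda>s. bapp (exp (s *\<^sub>R (- L))) (F s)))"
  shows "Y 0 = y0" "\<And>t. t \<in> {0..T} \<Longrightarrow> (Y has_vector_derivative (bapp L (Y t) + F t)) (at t within {0..T})"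
proof -
  show "Y 0 = y0" by (simp add: Y_def)
  fix t assume t: "t \<in> {0..T}"
  have c: "continuous_on {0..T} (\<lambda>s. bapp (exp (s *\<^sub>R (- L))) (F s))"
    by (intro bapp.continuous_on exp_cont F)
  have I: "((\<lambda>u. integral {0..u} (\<lambda>s. bapp (exp (s *\<^sub>R (- L))) (F s))) has_vector_derivative
      bapp (exp (t *\<^sub>R (- L))) (F t)) (at t within {0..T})"
    by (rule integral_has_vector_derivative[OF c t])
  have I2: "((\<lambda>u. y0 + integral {0..u} (\<lambda>s. bapp (exp (s *\<^sub>R (- L))) (F s))) has_vector_derivative
      bapp (exp (t *\<^sub>R (- L))) (F t)) (at t within {0..T})"
    using has_vector_derivative_add[OF has_vector_derivative_const I] by simp
  have D: "(Y has_vector_derivative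
      (bapp (exp (t *\<^sub>R L)) (bapp (exp (t *\<^sub>R (- L))) (F t)) +
       bapp (exp (t *\<^sub>R L) * L) (y0 + integral {0..t} (\<lambda>s. bapp (exp (s *\<^sub>R (- L))) (F s)))))
      (at t within {0..T})"
    unfolding Y_def by (rule bapp.has_vector_derivative[OF exp_vd I2])
  have e: "bapp (exp (t *\<^sub>R L)) (bapp (exp (t *\<^sub>R (- L))) (F t)) = F t"
    by (simp add: bapp_mult[symmetric] exp_minus_inverse)
  have f: "bapp (exp (t *\<^sub>R L) * L) w = bapp L (bapp (exp (t *\<^sub>R L)) w)" for w
    by (simp add: bapp_mult[symmetric] exp_times_scaleR_commute)
  show "(Y has_vector_derivative (bapp L (Y t) + F t)) (at t within {0..T})"
    using D unfolding e f by (simp add: Y_def add.commute)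
qed

lemma ode_uniq:
  fixes L :: "'a::euclidean_space bop" and Y :: "real \<Rightarrow> 'a"
  assumes D: "\<And>t. t \<in> {0..T} \<Longrightarrow> (Y has_vector_derivative bapp L (Y t)) (at t within {0..T})"
    and Y0: "Y 0 = 0" and t: "t \<in> {0..T}"
  shows "Y t = 0"
proof -
  define W where "W = (\<lambda>t. bapp (exp (t *\<^sub>R (- L))) (Y t))"
  have "(W has_derivative (\<lambda>h. 0)) (at s within {0..T})" if s: "s \<in> {0..T}" for s
  proof -
    have "(W has_vector_derivative (bapp (exp (s *\<^sub>R (- L))) (bapp L (Y s)) + bapp (exp (s *\<^sub>R (- L)) * - L) (Y s)))
       (at s within {0..T})"
      unfolding W_def by (rule bapp.has_vector_derivative[OF exp_vd D[OF s]])
    moreover have "bapp (exp (s *\<^sub>R (- L))) (bapp L (Y s)) + bapp (exp (s *\<^sub>R (- L)) * - L) (Y s) = 0"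
      by (simp add: bapp_mult[symmetric] bapp.minus_left)
    ultimately show ?thesis by (simp add: has_vector_derivative_def)
  qed
  then obtain c where c: "\<forall>s\<in>{0..T}. W s = c"
    using has_derivative_zero_constant[of "{0..T}" W] by auto
  have T0: "0 \<in> {0..T}" using t by auto
  have "W 0 = 0" by (simp add: W_def Y0)
  then have "W t = 0" using c T0 t by metis
  have "Y t = bapp (exp (t *\<^sub>R L) * exp (- (t *\<^sub>R L))) (Y t)"
    by (simp only: exp_minus_inverse bapp_one)
  then have "Y t = bapp (exp (t *\<^sub>R L)) (W t)"
    by (simp add: W_def bapp_mult)
  then show ?thesis using \<open>W t = 0\<close> by (simp add: bapp.zero_right)
qed



lemma cont_mv[continuous_intros]:
  "continuous_on S f \<Longrightarrow> continuous_on S (\<lambda>s. (M::real^'n^'m) *v f s)"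
  by (rule bounded_linear.continuous_on[OF matrix_vector_mul_bounded_linear])

lemma int_to_deriv:
  fixes f y :: "real \<Rightarrow> 'a::banach"
  assumes c: "continuous_on {0..T} f" and I: "\<forall>t\<in>{0..T}. (f has_integral y t) {0..t}"
    and t: "t \<in> {0..T}"
  shows "(y has_vector_derivative f t) (at t within {0..T})"
proof -
  have "\<And>s. s \<in> {0..T} \<Longrightarrow> y s = integral {0..s} f"
    using I by (metis integral_unique)
  then show ?thesis
    by (rule has_vector_derivative_transform[OF t _ integral_has_vector_derivative[OF c t]])
qed

lemma int_to_deriv2:
  fixes f y :: "real \<Rightarrow> 'a::banach"
  assumes c: "continuous_on {0..T} f" and I: "\<forall>t\<in>{0..T}. (f has_integral (y t - k)) {t..T}"
    and t: "t \<in> {0..T}"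
  shows "(y has_vector_derivative - f t) (at t within {0..T})"
proof -
  have fi: "f integrable_on {0..T}" using c by (rule integrable_continuous_real)
  have A: "y s = (k + integral {0..T} f) - integral {0..s} f" if s: "s \<in> {0..T}" for s
  proof -
    have "y s - k = integral {s..T} f" using I s by (metis integral_unique)
    moreover have "integral {0..s} f + integral {s..T} f = integral {0..T} f"
      using s fi by (intro Henstock_Kurzweil_Integration.integral_combine[where a=0 and c=s and b=T and f=f]) auto
    ultimately show ?thesis by (simp add: algebra_simps)
  qed
  have B0: "((\<lambda>s. (k + integral {0..T} f) - integral {0..s} f) has_vector_derivative 0 - f t)
      (at t within {0..T})"
    by (intro has_vector_derivative_diff has_vector_derivative_const integral_has_vector_derivative c t)
  have B: "((\<lambda>s. (k + integral {0..T} f) - integral {0..s} f) has_vector_derivative - f t)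
      (at t within {0..T})" using B0 by simp
  show ?thesis
    by (rule has_vector_derivative_transform[OF t _ B]) (rule A)
qed

lemma deriv_to_int:
  fixes f y :: "real \<Rightarrow> 'a::banach"
  assumes D: "\<And>t. t\<in>{0..T} \<Longrightarrow> (y has_vector_derivative f t) (at t within {0..T})"
    and t: "t \<in> {0..T}"
  shows "(f has_integral (y t - y 0)) {0..t}"
  using t by (intro fundamental_theorem_of_calculus)
    (auto intro: has_vector_derivative_within_subset[OF D])

lemma deriv_to_int2:
  fixes f y :: "real \<Rightarrow> 'a::banach"
  assumes D: "\<And>t. t\<in>{0..T} \<Longrightarrow> (y has_vector_derivative f t) (at t within {0..T})"
    and t: "t \<in> {0..T}"
  shows "(f has_integral (y T - y t)) {t..T}"
  using t by (intro fundamental_theorem_of_calculus)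
    (auto intro: has_vector_derivative_within_subset[OF D])

definition mop :: "real^'n^'n \<Rightarrow> (real^'n) bop" where
  "mop M = bop_abs (Blinfun (\<lambda>v. M *v v))"

lemma bapp_mop[simp]: "bapp (mop M) v = M *v v"
  by (simp add: mop_def bapp_def bop_abs_inverse bounded_linear_Blinfun_apply)

lemma bapp_lop: "bounded_linear f \<Longrightarrow> bapp (bop_abs (Blinfun f)) v = f v"
  by (simp add: bapp_def bop_abs_inverse bounded_linear_Blinfun_apply)

lemma energy_pt:
  fixes A G \<Gamma> Q :: "real^'n^'n" and w p :: "real^'n" and \<gamma> :: real
  assumes "\<gamma> > 0"
  shows "p \<bullet> ((A + G) *v w + \<gamma> *\<^sub>R p) +
     - (transpose (A + G) *v p + transpose (mat 1 - \<Gamma>) *v (Q *v (w - \<Gamma> *v w))) \<bullet> w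
   = - (w \<bullet> (Qhat \<Gamma> Q *v w)) + (1 / \<gamma>) * (norm (\<gamma> *\<^sub>R p))\<^sup>2"
proof -
  have q: "Qhat \<Gamma> Q *v w = transpose (mat 1 - \<Gamma>) *v (Q *v (w - \<Gamma> *v w))"
    by (simp add: Qhat_def matrix_vector_mul_assoc[symmetric] matrix_vector_mult_diff_rdistrib)
  have a: "(transpose (A + G) *v p) \<bullet> w = p \<bullet> ((A + G) *v w)"
    by (simp add: dot_lmul_matrix)
  have b: "w \<bullet> (transpose (mat 1 - \<Gamma>) *v x) = (transpose (mat 1 - \<Gamma>) *v x) \<bullet> w" for x
    by (rule inner_commute)
  have n: "(1 / \<gamma>) * (norm (\<gamma> *\<^sub>R p))\<^sup>2 = \<gamma> * (p \<bullet> p)"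
    using assms by (simp add: power2_norm_eq_inner[symmetric] power2_eq_square)
  show ?thesis
    unfolding q n b by (simp add: inner_add_left inner_add_right a inner_diff_left algebra_simps dot_lmul_matrix)
qed

lemma cont_L2:
  fixes g :: "real \<Rightarrow> real^'n"
  assumes c: "continuous_on {0..T} g"
  shows "L2_on T g"
  unfolding L2_on_def set_borel_measurable_def
proof
  show "(\<lambda>x. indicator {0..T} x *\<^sub>R g x) \<in> borel_measurable lborel"
    using borel_measurable_continuous_on_indicator[OF _ c] by simp
  show "set_integrable lborel {0..T} (\<lambda>t. (norm (g t))\<^sup>2)"
    by (intro borel_integrable_atLeastAtMost' continuous_intros c)
qed

lemma energy:
  fixes A G \<Gamma> Q H :: "real^'n^'n" and \<gamma> T :: real and w p :: "real \<Rightarrow> real^'n"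
  assumes T: "T > 0" and g: "\<gamma> > 0" and H1: "H1 A G \<Gamma> Q H \<gamma> T"
    and Dw: "\<And>t. t\<in>{0..T} \<Longrightarrow> (w has_vector_derivative ((A + G) *v w t + \<gamma> *\<^sub>R p t)) (at t within {0..T})"
    and Dp: "\<And>t. t\<in>{0..T} \<Longrightarrow> (p has_vector_derivative
       - (transpose (A + G) *v p t + transpose (mat 1 - \<Gamma>) *v (Q *v (w t - \<Gamma> *v w t)))) (at t within {0..T})"
    and w0: "w 0 = 0" and pT: "p T = H *v w T"
  shows "\<forall>t\<in>{0..T}. p t = 0 \<and> w t = 0"
proof -
  have cw: "continuous_on {0..T} w" by (rule continuous_on_vector_derivative[OF Dw])
  have cp: "continuous_on {0..T} p" by (rule continuous_on_vector_derivative[OF Dp])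
  obtain e0 where e0: "e0 > 0" and He: "\<And>g z. L2_on T g \<Longrightarrow> state_sol A G T g z \<Longrightarrow>
      Jpp \<Gamma> Q H \<gamma> T g z \<ge> e0 * L2_norm_sq T g"
    using H1 unfolding H1_def by blast
  define g where "g = (\<lambda>s. \<gamma> *\<^sub>R p s)"
  have cg: "continuous_on {0..T} g" unfolding g_def by (intro continuous_intros cp)
  have L2: "L2_on T g" by (rule cont_L2[OF cg])
  have ss: "state_sol A G T g w"
    unfolding state_sol_def
  proof
    show "continuous_on {0..T} w" by (rule cw)
    show "\<forall>t\<in>{0..T}. ((\<lambda>s. (A + G) *v w s + g s) has_integral w t) {0..t}"
      using deriv_to_int[OF Dw] w0 by (simp add: g_def)
  qed
  have J: "Jpp \<Gamma> Q H \<gamma> T g w \<ge> e0 * L2_norm_sq T g" by (rule He[OF L2 ss])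
  define j where "j = (\<lambda>s. - (w s \<bullet> (Qhat \<Gamma> Q *v w s)) + (1/\<gamma>) * (norm (g s))\<^sup>2)"
  have cj: "continuous_on {0..T} j" unfolding j_def by (intro continuous_intros cw cg)
  have Dphi: "((\<lambda>s. p s \<bullet> w s) has_vector_derivative j t) (at t within {0..T})" if t: "t \<in> {0..T}" for t
  proof -
    have "((\<lambda>s. p s \<bullet> w s) has_vector_derivative
       (p t \<bullet> ((A + G) *v w t + \<gamma> *\<^sub>R p t) +
        - (transpose (A + G) *v p t + transpose (mat 1 - \<Gamma>) *v (Q *v (w t - \<Gamma> *v w t))) \<bullet> w t))
       (at t within {0..T})"
      by (rule bounded_bilinear.has_vector_derivative[OF bounded_bilinear_inner Dp[OF t] Dw[OF t]])
    then show ?thesis unfolding energy_pt[OF g] j_def g_def .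
  qed
  have Ij: "(j has_integral (p T \<bullet> w T - p 0 \<bullet> w 0)) {0..T}"
    using deriv_to_int[OF Dphi, of T] T by simp
  have Ij2: "integral {0..T} j = w T \<bullet> (H *v w T)"
    using integral_unique[OF Ij] w0 pT by (simp add: inner_commute)
  have "Jpp \<Gamma> Q H \<gamma> T g w = integral {0..T} j - w T \<bullet> (H *v w T)"
    unfolding Jpp_def
    using set_borel_integral_eq_integral(2)[OF borel_integrable_atLeastAtMost'[OF cj]]
    by (simp add: j_def)
  then have J0: "Jpp \<Gamma> Q H \<gamma> T g w = 0" using Ij2 by simp
  define f where "f = (\<lambda>s. (norm (g s))\<^sup>2)"
  have cf: "continuous_on {0..T} f" unfolding f_def by (intro continuous_intros cg)
  have L2eq: "L2_norm_sq T g = integral {0..T} f"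
    unfolding L2_norm_sq_def f_def
    using set_borel_integral_eq_integral(2)[OF borel_integrable_atLeastAtMost'[OF cf[unfolded f_def]]] .
  have fi: "f integrable_on {0..T}" using cf by (rule integrable_continuous_real)
  have nn: "integral {0..T} f \<ge> 0"
    by (rule integral_nonneg[OF fi]) (simp add: f_def)
  have "e0 * integral {0..T} f \<le> 0" using J J0 L2eq by simp
  then have "integral {0..T} f \<le> 0" using e0 by (simp add: mult_le_0_iff)
  then have z: "integral {0..T} f = 0" using nn by simp
  have f0: "f t = 0" if t: "t \<in> {0..T}" for t
  proof (rule has_integral_0_cbox_imp_0[of 0 T f])
    show "continuous_on (cbox 0 T) f" using cf by simp
    show "\<And>x. x \<in> box 0 T \<Longrightarrow> 0 \<le> f x" by (simp add: f_def)
    show "(f has_integral 0) (cbox 0 T)" using fi z by (metis cbox_interval has_integral_integral)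
    show "box 0 T \<noteq> {}" using T by simp
    show "t \<in> cbox 0 T" using t by simp
  qed
  have p0: "p t = 0" if t: "t \<in> {0..T}" for t
    using f0[OF t] g by (simp add: f_def g_def)
  have "w t = 0" if t: "t \<in> {0..T}" for t
  proof (rule ode_uniq[where L="mop (A + G)" and T=T and Y=w, OF _ w0 t])
    fix s assume s: "s \<in> {0..T}"
    show "(w has_vector_derivative bapp (mop (A + G)) (w s)) (at s within {0..T})"
      using Dw[OF s] p0[OF s] by simp
  qed
  then show ?thesis using p0 by blast
qed

lemma has_integral_pt0: "(f has_integral y) {a..a::real} \<Longrightarrow> y = 0"
  using has_integral_unique[OF _ has_integral_refl(2)[of f a]] by simp

lemma bvp_uniq:
  fixes A G \<Gamma> Q H :: "real^'n^'n" and B :: "real^'n1^'n" and \<gamma> T :: real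
    and \<nu> :: "real \<Rightarrow> real^'n1"
  assumes T: "T > 0" and g: "\<gamma> > 0" and H1: "H1 A G \<Gamma> Q H \<gamma> T"
    and S1: "bvp_sol A B G \<Gamma> Q H \<gamma> T \<nu> zi z q"
    and S2: "bvp_sol A B G \<Gamma> Q H \<gamma> T \<nu> zi' z' q'"
  shows "\<forall>t\<in>{0..T}. zi t = zi' t \<and> z t = z' t \<and> q t = q' t"
proof -
  define e where "e = (\<lambda>s. zi s - zi' s)"
  define w where "w = (\<lambda>s. z s - z' s)"
  define p where "p = (\<lambda>s. q s - q' s)"
  note D1 = S1[unfolded bvp_sol_def] and D2 = S2[unfolded bvp_sol_def]
  have ce: "continuous_on {0..T} e" unfolding e_def using D1 D2 by (intro continuous_intros) auto
  have cw: "continuous_on {0..T} w" unfolding w_def using D1 D2 by (intro continuous_intros) auto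
  have cp: "continuous_on {0..T} p" unfolding p_def using D1 D2 by (intro continuous_intros) auto
  have Ie: "\<forall>t\<in>{0..T}. ((\<lambda>s. A *v e s + G *v w s + \<gamma> *\<^sub>R p s) has_integral e t) {0..t}"
  proof
    fix t assume t: "t \<in> {0..T}"
    have "((\<lambda>s. (A *v zi s + B *v \<nu> s + G *v z s + \<gamma> *\<^sub>R q s) - (A *v zi' s + B *v \<nu> s + G *v z' s + \<gamma> *\<^sub>R q' s))
       has_integral (zi t - zi' t)) {0..t}"
      using D1 D2 t by (intro has_integral_diff) auto
    moreover have "(\<lambda>s. (A *v zi s + B *v \<nu> s + G *v z s + \<gamma> *\<^sub>R q s) - (A *v zi' s + B *v \<nu> s + G *v z' s + \<gamma> *\<^sub>R q' s))
       = (\<lambda>s. A *v e s + G *v w s + \<gamma> *\<^sub>R p s)"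
      by (rule ext) (simp add: e_def w_def p_def algebra_simps)
    ultimately show "((\<lambda>s. A *v e s + G *v w s + \<gamma> *\<^sub>R p s) has_integral e t) {0..t}"
      by (simp add: e_def)
  qed
  have Iw: "\<forall>t\<in>{0..T}. ((\<lambda>s. (A + G) *v w s + \<gamma> *\<^sub>R p s) has_integral w t) {0..t}"
  proof
    fix t assume t: "t \<in> {0..T}"
    have "((\<lambda>s. ((A + G) *v z s + \<gamma> *\<^sub>R q s) - ((A + G) *v z' s + \<gamma> *\<^sub>R q' s))
       has_integral (z t - z' t)) {0..t}"
      using D1 D2 t by (intro has_integral_diff) auto
    moreover have "(\<lambda>s. ((A + G) *v z s + \<gamma> *\<^sub>R q s) - ((A + G) *v z' s + \<gamma> *\<^sub>R q' s))
       = (\<lambda>s. (A + G) *v w s + \<gamma> *\<^sub>R p s)"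
      by (rule ext) (simp add: w_def p_def algebra_simps)
    ultimately show "((\<lambda>s. (A + G) *v w s + \<gamma> *\<^sub>R p s) has_integral w t) {0..t}"
      by (simp add: w_def)
  qed
  have Ip: "\<forall>t\<in>{0..T}. ((\<lambda>s. transpose (A + G) *v p s + transpose (mat 1 - \<Gamma>) *v (Q *v (e s - \<Gamma> *v w s)))
      has_integral (p t - H *v e T)) {t..T}"
  proof
    fix t assume t: "t \<in> {0..T}"
    have "((\<lambda>s. (transpose (A + G) *v q s + transpose (mat 1 - \<Gamma>) *v (Q *v (zi s - \<Gamma> *v z s)))
             - (transpose (A + G) *v q' s + transpose (mat 1 - \<Gamma>) *v (Q *v (zi' s - \<Gamma> *v z' s))))
       has_integral ((q t - H *v zi T) - (q' t - H *v zi' T))) {t..T}"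
      using D1 D2 t by (intro has_integral_diff) auto
    moreover have "(\<lambda>s. (transpose (A + G) *v q s + transpose (mat 1 - \<Gamma>) *v (Q *v (zi s - \<Gamma> *v z s)))
             - (transpose (A + G) *v q' s + transpose (mat 1 - \<Gamma>) *v (Q *v (zi' s - \<Gamma> *v z' s))))
       = (\<lambda>s. transpose (A + G) *v p s + transpose (mat 1 - \<Gamma>) *v (Q *v (e s - \<Gamma> *v w s)))"
      by (rule ext) (simp add: e_def w_def p_def algebra_simps)
    moreover have "(q t - H *v zi T) - (q' t - H *v zi' T) = p t - H *v e T"
      by (simp add: e_def p_def algebra_simps)
    ultimately show "((\<lambda>s. transpose (A + G) *v p s + transpose (mat 1 - \<Gamma>) *v (Q *v (e s - \<Gamma> *v w s)))
      has_integral (p t - H *v e T)) {t..T}" by simp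
  qed
  have T0: "0 \<in> {0..T}" "T \<in> {0..T}" using T by auto
  have e0: "e 0 = 0" using Ie T0(1) has_integral_pt0 by blast
  have w0: "w 0 = 0" using Iw T0(1) has_integral_pt0 by blast
  have "((\<lambda>s. transpose (A + G) *v p s + transpose (mat 1 - \<Gamma>) *v (Q *v (e s - \<Gamma> *v w s)))
      has_integral (p T - H *v e T)) {T..T}" using Ip T0(2) by blast
  then have "p T - H *v e T = 0" by (rule has_integral_pt0)
  then have pT: "p T = H *v e T" by simp
  have De: "(e has_vector_derivative (A *v e t + G *v w t + \<gamma> *\<^sub>R p t)) (at t within {0..T})"
    if t: "t \<in> {0..T}" for t
    by (rule int_to_deriv[OF _ Ie t]) (intro continuous_intros ce cw cp)
  have Dw: "(w has_vector_derivative ((A + G) *v w t + \<gamma> *\<^sub>R p t)) (at t within {0..T})"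
    if t: "t \<in> {0..T}" for t
    by (rule int_to_deriv[OF _ Iw t]) (intro continuous_intros cw cp)
  have Dp: "(p has_vector_derivative - (transpose (A + G) *v p t + transpose (mat 1 - \<Gamma>) *v (Q *v (e t - \<Gamma> *v w t))))
     (at t within {0..T})" if t: "t \<in> {0..T}" for t
    by (rule int_to_deriv2[OF _ Ip t]) (intro continuous_intros ce cw cp)
  have ew: "e t = w t" if t: "t \<in> {0..T}" for t
  proof -
    have "(\<lambda>s. e s - w s) t = 0"
    proof (rule ode_uniq[where L="mop A" and T=T and Y="\<lambda>s. e s - w s", OF _ _ t])
      fix s assume s: "s \<in> {0..T}"
      show "((\<lambda>s. e s - w s) has_vector_derivative bapp (mop A) (e s - w s)) (at s within {0..T})"
        using has_vector_derivative_diff[OF De[OF s] Dw[OF s]] by (simp add: algebra_simps)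
    next
      show "e 0 - w 0 = 0" using e0 w0 by simp
    qed
    then show ?thesis by simp
  qed
  have Dp': "(p has_vector_derivative - (transpose (A + G) *v p t + transpose (mat 1 - \<Gamma>) *v (Q *v (w t - \<Gamma> *v w t))))
     (at t within {0..T})" if t: "t \<in> {0..T}" for t
    using Dp[OF t] ew[OF t] by simp
  have pT': "p T = H *v w T" using pT ew T0 by simp
  have "\<forall>t\<in>{0..T}. p t = 0 \<and> w t = 0"
    by (rule energy[OF T g H1 Dw Dp' w0 pT'])
  then show ?thesis using ew unfolding e_def w_def p_def by auto
qed



lemma le_one_sq: "(n::real) \<le> 1 + n\<^sup>2"
proof -
  have "0 \<le> (n - 1)\<^sup>2" by simp
  then have "0 \<le> n*n - 2*n + 1" by (simp add: power2_eq_square algebra_simps)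
  moreover have "0 \<le> n*n" by simp
  ultimately show ?thesis unfolding power2_eq_square by linarith
qed

lemma L2_integrable:
  fixes \<nu> :: "real \<Rightarrow> real^'n1" and B :: "real^'n1^'n"
  assumes "L2_on T \<nu>"
  shows "(\<lambda>s. B *v \<nu> s) integrable_on {0..T}"
proof -
  have m: "set_borel_measurable lborel {0..T} \<nu>" and i2: "set_integrable lborel {0..T} (\<lambda>t. (norm (\<nu> t))\<^sup>2)"
    using assms unfolding L2_on_def by auto
  have one: "set_integrable lborel {0..T} (\<lambda>t. 1::real)"
    by (intro borel_integrable_atLeastAtMost' continuous_on_const)
  have s: "set_integrable lborel {0..T} (\<lambda>t. 1 + (norm (\<nu> t))\<^sup>2)"
    by (rule set_integral_add(1)[OF one i2])
  have b: "norm (\<nu> x) \<le> norm (1 + (norm (\<nu> x))\<^sup>2)" for x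
  proof -
    have "norm (\<nu> x) \<le> 1 + (norm (\<nu> x))\<^sup>2"
      by (rule le_one_sq)
    then show ?thesis by simp
  qed
  have "set_integrable lborel {0..T} \<nu>"
    by (rule set_integrable_bound[OF s m]) (rule AE_I2, rule impI, rule b)
  then have "\<nu> integrable_on {0..T}" by (rule set_borel_integral_eq_integral(1))
  from integrable_linear[OF this matrix_vector_mul_bounded_linear[of B]]
  show ?thesis by (simp add: o_def)
qed

lemma d_exists:
  fixes \<nu> :: "real \<Rightarrow> real^'n1" and B :: "real^'n1^'n" and A :: "real^'n^'n"
  assumes "L2_on T \<nu>"
  shows "\<exists>d. continuous_on {0..T} d \<and>
     (\<forall>t\<in>{0..T}. ((\<lambda>s. A *v d s + B *v \<nu> s) has_integral d t) {0..t})"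
proof -
  have Bi: "(\<lambda>s. B *v \<nu> s) integrable_on {0..T}" by (rule L2_integrable[OF assms])
  define u where "u = (\<lambda>t. integral {0..t} (\<lambda>s. B *v \<nu> s))"
  have cu: "continuous_on {0..T} u" unfolding u_def by (rule indefinite_integral_continuous_1[OF Bi])
  have Iu: "((\<lambda>s. B *v \<nu> s) has_integral u t) {0..t}" if t: "t \<in> {0..T}" for t
    unfolding u_def using t by (intro integrable_integral integrable_on_subinterval[OF Bi]) auto
  define e where "e = (\<lambda>t. bapp (exp (t *\<^sub>R mop A)) (0 + integral {0..t} (\<lambda>s. bapp (exp (s *\<^sub>R (- mop A))) (A *v u s))))"
  have cAu: "continuous_on {0..T} (\<lambda>s. A *v u s)" by (intro continuous_intros cu)
  have E1: "e 0 = 0" unfolding e_def by simp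
  have De0: "(e has_vector_derivative (bapp (mop A) (e t) + A *v u t)) (at t within {0..T})" if t: "t \<in> {0..T}" for t
    unfolding e_def by (rule ode_exist(2)[OF cAu t])
  have De: "(e has_vector_derivative (A *v e t + A *v u t)) (at t within {0..T})" if t: "t \<in> {0..T}" for t
    using De0[OF t] by simp
  have ce: "continuous_on {0..T} e" by (rule continuous_on_vector_derivative[OF De])
  define d where "d = (\<lambda>t. u t + e t)"
  have "((\<lambda>s. A *v d s + B *v \<nu> s) has_integral d t) {0..t}" if t: "t \<in> {0..T}" for t
  proof -
    have "((\<lambda>s. (A *v e s + A *v u s) + B *v \<nu> s) has_integral (e t - e 0 + u t)) {0..t}"
      by (intro has_integral_add deriv_to_int[OF De t] Iu t)
    moreover have "(\<lambda>s. (A *v e s + A *v u s) + B *v \<nu> s) = (\<lambda>s. A *v d s + B *v \<nu> s)"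
      by (rule ext) (simp add: d_def matrix_vector_right_distrib)
    ultimately show ?thesis using E1 by (simp add: d_def add.commute)
  qed
  moreover have "continuous_on {0..T} d" unfolding d_def by (intro continuous_intros cu ce)
  ultimately show ?thesis by blast
qed

definition Lf :: "real^'n^'n \<Rightarrow> real^'n^'n \<Rightarrow> real^'n^'n \<Rightarrow> real^'n^'n \<Rightarrow> real
   \<Rightarrow> (real^'n) \<times> (real^'n) \<Rightarrow> (real^'n) \<times> (real^'n)" where
  "Lf A G \<Gamma> Q \<gamma> Y = ((A + G) *v fst Y + \<gamma> *\<^sub>R snd Y,
     - (transpose (A + G) *v snd Y + transpose (mat 1 - \<Gamma>) *v (Q *v (fst Y - \<Gamma> *v fst Y))))"

lemma linear_Lf: "linear (Lf A G \<Gamma> Q \<gamma>)"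
  unfolding linear_iff Lf_def
  by (auto simp: algebra_simps)

lemma bl_Lf: "bounded_linear (Lf A G \<Gamma> Q \<gamma>)"
  by (rule linear_conv_bounded_linear[THEN iffD1, OF linear_Lf])

definition Lop :: "real^'n^'n \<Rightarrow> real^'n^'n \<Rightarrow> real^'n^'n \<Rightarrow> real^'n^'n \<Rightarrow> real
   \<Rightarrow> ((real^'n) \<times> (real^'n)) bop" where
  "Lop A G \<Gamma> Q \<gamma> = bop_abs (Blinfun (Lf A G \<Gamma> Q \<gamma>))"

lemma bapp_Lop[simp]: "bapp (Lop A G \<Gamma> Q \<gamma>) Y = Lf A G \<Gamma> Q \<gamma> Y"
  unfolding Lop_def by (rule bapp_lop[OF bl_Lf])

lemma bvp_exist:
  fixes A G \<Gamma> Q H :: "real^'n^'n" and B :: "real^'n1^'n" and \<gamma> T :: real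
    and \<nu> :: "real \<Rightarrow> real^'n1"
  assumes T: "T > 0" and g: "\<gamma> > 0" and H1: "H1 A G \<Gamma> Q H \<gamma> T" and L2: "L2_on T \<nu>"
  shows "\<exists>zi z q. bvp_sol A B G \<Gamma> Q H \<gamma> T \<nu> zi z q"
proof -
  obtain d where cd: "continuous_on {0..T} d"
    and Id: "\<forall>t\<in>{0..T}. ((\<lambda>s. A *v d s + B *v \<nu> s) has_integral d t) {0..t}"
    using d_exists[OF L2] by blast
  define L where "L = Lop A G \<Gamma> Q \<gamma>"
  define F where "F = (\<lambda>s. (0::real^'n, - (transpose (mat 1 - \<Gamma>) *v (Q *v d s))))"
  have cF: "continuous_on {0..T} F" unfolding F_def by (intro continuous_intros cd)
  define K where "K = (\<lambda>t. integral {0..t} (\<lambda>s. bapp (exp (s *\<^sub>R (- L))) (F s)))"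
  define Sol where "Sol = (\<lambda>p t. bapp (exp (t *\<^sub>R L)) ((0, p) + K t))"
  have S0: "Sol p 0 = (0, p)" for p by (simp add: Sol_def K_def)
  have DS0: "(Sol p has_vector_derivative (bapp L (Sol p t) + F t)) (at t within {0..T})"
    if t: "t \<in> {0..T}" for p t
    unfolding Sol_def K_def by (rule ode_exist(2)[OF cF t])
  have DS: "(Sol p has_vector_derivative (Lf A G \<Gamma> Q \<gamma> (Sol p t) + F t)) (at t within {0..T})"
    if t: "t \<in> {0..T}" for p t
    using DS0[OF t] by (simp add: L_def)
  define EH where "EH = (\<lambda>p t. bapp (exp (t *\<^sub>R L)) (0, p))"
  have cZ: "continuous_on {0..T} (\<lambda>s. 0::(real^'n) \<times> (real^'n))" by (rule continuous_on_const)
  have DH0: "((\<lambda>t. bapp (exp (t *\<^sub>R L)) ((0, p) + integral {0..t} (\<lambda>s. bapp (exp (s *\<^sub>R (- L))) ((\<lambda>s. 0) s))))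
      has_vector_derivative (bapp L (bapp (exp (t *\<^sub>R L)) ((0, p) + integral {0..t} (\<lambda>s. bapp (exp (s *\<^sub>R (- L))) ((\<lambda>s. 0) s)))) + 0))
      (at t within {0..T})"
    if t: "t \<in> {0..T}" for p t
    by (rule ode_exist(2)[OF cZ t])
  have DH: "(EH p has_vector_derivative (Lf A G \<Gamma> Q \<gamma> (EH p t))) (at t within {0..T})"
    if t: "t \<in> {0..T}" for p t
    using DH0[OF t, of p] by (simp add: EH_def L_def bapp.zero_right)
  have EH0: "EH p 0 = (0, p)" for p by (simp add: EH_def)
  have eha: "EH (x + y) t = EH x t + EH y t" for x y t
  proof -
    have "EH x t + EH y t = bapp (exp (t *\<^sub>R L)) ((0, x) + (0, y))"
      unfolding EH_def by (rule bapp.add_right[symmetric])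
    then show ?thesis by (simp add: EH_def)
  qed
  have ehs: "EH (c *\<^sub>R x) t = c *\<^sub>R EH x t" for c x t
  proof -
    have "c *\<^sub>R EH x t = bapp (exp (t *\<^sub>R L)) (c *\<^sub>R (0, x))"
      unfolding EH_def by (rule bapp.scaleR_right[symmetric])
    then show ?thesis by (simp add: EH_def)
  qed
  define Phi where "Phi = (\<lambda>p. snd (EH p T) - H *v fst (EH p T))"
  have linPhi: "linear Phi"
    unfolding linear_iff Phi_def by (simp add: eha ehs algebra_simps)
  have ker: "p = 0" if "Phi p = 0" for p
  proof -
    have Dw: "((\<lambda>t. fst (EH p t)) has_vector_derivative ((A + G) *v fst (EH p t) + \<gamma> *\<^sub>R snd (EH p t))) (at t within {0..T})"
      if t: "t \<in> {0..T}" for t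
      using bounded_linear.has_vector_derivative[OF bounded_linear_fst DH[OF t]] by (simp add: Lf_def)
    have Dp: "((\<lambda>t. snd (EH p t)) has_vector_derivative
       - (transpose (A + G) *v snd (EH p t) + transpose (mat 1 - \<Gamma>) *v (Q *v (fst (EH p t) - \<Gamma> *v fst (EH p t)))))
        (at t within {0..T})"
      if t: "t \<in> {0..T}" for t
      using bounded_linear.has_vector_derivative[OF bounded_linear_snd DH[OF t]] by (simp add: Lf_def)
    have w0: "fst (EH p 0) = 0" by (simp add: EH0)
    have pT: "snd (EH p T) = H *v fst (EH p T)" using that by (simp add: Phi_def)
    have "\<forall>t\<in>{0..T}. snd (EH p t) = 0 \<and> fst (EH p t) = 0"
      by (rule energy[OF T g H1 Dw Dp w0 pT])
    then have "snd (EH p 0) = 0" using T by auto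
    then show ?thesis by (simp add: EH0)
  qed
  have "inj Phi"
  proof (rule injI)
    fix x y assume "Phi x = Phi y"
    then have "Phi (x - y) = 0" using linear_diff[OF linPhi] by simp
    then have "x - y = 0" by (rule ker)
    then show "x = y" by simp
  qed
  then have "surj Phi" by (rule linear_inj_imp_surj[OF linPhi])
  define c0 where "c0 = bapp (exp (T *\<^sub>R L)) (K T)"
  obtain p where p: "Phi p = H *v (fst c0 + d T) - snd c0"
    using \<open>surj Phi\<close> by (metis surjD)
  have SolT: "Sol p T = EH p T + c0"
    unfolding Sol_def EH_def c0_def by (rule bapp.add_right)
  define z where "z = (\<lambda>t. fst (Sol p t))"
  define q where "q = (\<lambda>t. snd (Sol p t))"
  define zi where "zi = (\<lambda>t. z t + d t)"
  have Dz: "(z has_vector_derivative ((A + G) *v z t + \<gamma> *\<^sub>R q t)) (at t within {0..T})"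
    if t: "t \<in> {0..T}" for t
    using bounded_linear.has_vector_derivative[OF bounded_linear_fst DS[OF t, of p]]
    by (simp add: Lf_def F_def z_def q_def)
  have Dq: "(q has_vector_derivative
       - (transpose (A + G) *v q t + transpose (mat 1 - \<Gamma>) *v (Q *v (zi t - \<Gamma> *v z t))))
        (at t within {0..T})"
    if t: "t \<in> {0..T}" for t
  proof (rule has_vector_derivative_eq_rhs)
    show "(q has_vector_derivative snd (Lf A G \<Gamma> Q \<gamma> (Sol p t) + F t)) (at t within {0..T})"
      unfolding q_def by (rule bounded_linear.has_vector_derivative[OF bounded_linear_snd DS[OF t, of p]])
    show "snd (Lf A G \<Gamma> Q \<gamma> (Sol p t) + F t) =
       - (transpose (A + G) *v q t + transpose (mat 1 - \<Gamma>) *v (Q *v (zi t - \<Gamma> *v z t)))"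
      by (simp add: Lf_def F_def z_def q_def zi_def algebra_simps)
  qed
  have z0: "z 0 = 0" by (simp add: z_def S0)
  have cz: "continuous_on {0..T} z" by (rule continuous_on_vector_derivative[OF Dz])
  have cq: "continuous_on {0..T} q" by (rule continuous_on_vector_derivative[OF Dq])
  have czi: "continuous_on {0..T} zi" unfolding zi_def by (intro continuous_intros cz cd)
  have qT: "q T = H *v zi T"
    using p SolT by (simp add: q_def zi_def z_def Phi_def algebra_simps)
  have "bvp_sol A B G \<Gamma> Q H \<gamma> T \<nu> zi z q"
    unfolding bvp_sol_def
  proof (intro conjI ballI czi cz cq)
    fix t assume t: "t \<in> {0..T}"
    have "((\<lambda>s. ((A + G) *v z s + \<gamma> *\<^sub>R q s) + (A *v d s + B *v \<nu> s)) has_integral (z t - z 0 + d t)) {0..t}"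
      using Id t by (intro has_integral_add deriv_to_int[OF Dz t]) auto
    moreover have "(\<lambda>s. ((A + G) *v z s + \<gamma> *\<^sub>R q s) + (A *v d s + B *v \<nu> s))
        = (\<lambda>s. A *v zi s + B *v \<nu> s + G *v z s + \<gamma> *\<^sub>R q s)"
      by (rule ext) (simp add: zi_def algebra_simps)
    ultimately show "((\<lambda>s. A *v zi s + B *v \<nu> s + G *v z s + \<gamma> *\<^sub>R q s) has_integral zi t) {0..t}"
      by (simp add: z0 zi_def)
  next
    fix t assume t: "t \<in> {0..T}"
    show "((\<lambda>s. (A + G) *v z s + \<gamma> *\<^sub>R q s) has_integral z t) {0..t}"
      using deriv_to_int[OF Dz t] z0 by simp
  next
    fix t assume t: "t \<in> {0..T}"
    have "((\<lambda>s. - (- (transpose (A + G) *v q s + transpose (mat 1 - \<Gamma>) *v (Q *v (zi s - \<Gamma> *v z s)))))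
       has_integral - (q T - q t)) {t..T}"
      by (rule has_integral_neg[OF deriv_to_int2[OF Dq t]])
    then show "((\<lambda>s. transpose (A + G) *v q s + transpose (mat 1 - \<Gamma>) *v (Q *v (zi s - \<Gamma> *v z s)))
       has_integral (q t - H *v zi T)) {t..T}"
      by (simp add: qT add.commute)
  qed
  then show ?thesis by blast
qed


theorem lemma5:
  fixes A G \<Gamma> Q H :: "real^'n^'n" and B :: "real^'n1^'n" and \<gamma> T :: real
    and \<nu> :: "real \<Rightarrow> real^'n1"
  assumes "T > 0" and "\<gamma> > 0" and "psd Q" and "psd H"
    and "H1 A G \<Gamma> Q H \<gamma> T"
    and "L2_on T \<nu>"
  shows "(\<exists>zi z q. bvp_sol A B G \<Gamma> Q H \<gamma> T \<nu> zi z q) \<and>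
         (\<forall>zi z q zi' z' q'. bvp_sol A B G \<Gamma> Q H \<gamma> T \<nu> zi z q \<longrightarrow>
             bvp_sol A B G \<Gamma> Q H \<gamma> T \<nu> zi' z' q' \<longrightarrow>
             (\<forall>t\<in>{0..T}. zi t = zi' t \<and> z t = z' t \<and> q t = q' t))"
  using bvp_exist[OF assms(1,2,5,6)] bvp_uniq[OF assms(1,2,5)] by blast

end
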